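(* Let $\mathcal{F}\subseteq[\omega]^{<\omega}$ be a compact hereditary family covering $\omega$. Then $X^{\mathcal{F}}=FIN(\lVert\cdot\rVert^{\mathcal{F}})$.
   Context: $\omega=\{1,2,3,\dots\}$; $[\omega]^{<\omega}$ is the family of finite subsets of $\omega$. Subsets of $\omega$ are identified with elements of $2^\omega$; compact means compact in $2^\omega$; hereditary means closed under subsets. A partition is a family $\mathcal{P}\subseteq\mathcal{P}(\omega)$ with $\emptyset\in\mathcal{P}$, $\bigcup\mathcal{P}=\omega$, elements pairwise disjoint; $\mathbb{P}_\mathcal{F}$ is the set of partitions contained in $\mathcal{F}$. For $x\in\mathbb{R}^\omega$, $\lVert x\rVert^{\mathcal{F}}=\inf_{\mathcal{P}\in\mathbb{P}_\mathcal{F}}\sum_{F\in\mathcal{P}}\sup_{k\in F}|x(k)|\in[0,\infty]$. $P_{\omega\setminus n}(x)$ is the sequence agreeing with $x$ on $\{n+1,n+2,\dots\}$ and $0$ on $\{1,\dots,n\}$. $FIN(\varphi)=\{x:\varphi(x)<\infty\}$, $EXH(\varphi)=\{x:\lim_n\varphi(P_{\omega\setminus n}(x))=0\}$, and $X^{\mathcal{F}}=EXH(\lVert\cdot\rVert^{\mathcal{F}})$. *)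

theory Defs
  imports "HOL-Analysis.Analysis"
begin

definition omega :: "nat set" where "omega = {1..}"

text \<open>Identification of subsets of omega with points of the Cantor space nat => bool
  (product topology of the discrete topology on bool).\<close>
definition char_set :: "nat set \<Rightarrow> (nat \<Rightarrow> bool)" where
  "char_set A = (\<lambda>n. n \<in> A)"

definition hereditary :: "nat set set \<Rightarrow> bool" where
  "hereditary \<F> \<longleftrightarrow> (\<forall>A\<in>\<F>. \<forall>B. B \<subseteq> A \<longrightarrow> B \<in> \<F>)"

definition is_partition :: "nat set set \<Rightarrow> bool" where
  "is_partition \<P> \<longleftrightarrow> {} \<in> \<P> \<and> \<Union>\<P> = omega \<and>
     (\<forall>A\<in>\<P>. \<forall>B\<in>\<P>. A \<noteq> B \<longrightarrow> A \<inter> B = {})"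

definition partitions_in :: "nat set set \<Rightarrow> nat set set set" where
  "partitions_in \<F> = {\<P>. is_partition \<P> \<and> \<P> \<subseteq> \<F>}"

text \<open>The norm ||x||^F with values in [0,infinity] (ennreal); sup over the empty set is 0,
  the infimum over the empty set is infinity.\<close>
definition fnorm :: "nat set set \<Rightarrow> (nat \<Rightarrow> real) \<Rightarrow> ennreal" where
  "fnorm \<F> x = (INF \<P> \<in> partitions_in \<F>. (\<Sum>\<^sub>\<infinity>F\<in>\<P>. (SUP k\<in>F. ennreal \<bar>x k\<bar>)))"

definition tail_proj :: "nat \<Rightarrow> (nat \<Rightarrow> real) \<Rightarrow> (nat \<Rightarrow> real)" where
  "tail_proj n x = (\<lambda>k. if k \<le> n then 0 else x k)"

definition FIN :: "((nat \<Rightarrow> real) \<Rightarrow> ennreal) \<Rightarrow> (nat \<Rightarrow> real) set" where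
  "FIN \<phi> = {x. \<phi> x < \<infinity>}"

definition EXH :: "((nat \<Rightarrow> real) \<Rightarrow> ennreal) \<Rightarrow> (nat \<Rightarrow> real) set" where
  "EXH \<phi> = {x. (\<lambda>n. \<phi> (tail_proj n x)) \<longlonglongrightarrow> 0}"

definition XF :: "nat set set \<Rightarrow> (nat \<Rightarrow> real) set" where
  "XF \<F> = EXH (fnorm \<F>)"

end

theory Submission
  imports Defs
begin

lemma L1:
  fixes f :: "'a \<Rightarrow> ennreal"
  assumes "infsum f P < top" "a > 0"
  shows "\<exists>A. finite A \<and> A \<subseteq> P \<and> infsum f P < sum f A + a"
proof (cases "infsum f P = 0")
  case True then show ?thesis using assms by (intro exI[of _ "{}"]) auto
next
  case False
  have eq: "infsum f P = (SUP F\<in>{F. finite F \<and> F\<subseteq>P}. sum f F)"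
    by (rule nonneg_infsum_complete) auto
  have "infsum f P - a < infsum f P"
    using False assms by (simp add: ennreal_between linorder_neq_iff)
  then obtain A where A: "finite A" "A \<subseteq> P" "infsum f P - a < sum f A"
    unfolding eq less_SUP_iff by (auto simp: eq[symmetric])
  then have "infsum f P < sum f A + a"
    by (metis assms(1) ennreal_add_diff_cancel_right ennreal_add_eq_top
    less_diff_eq_ennreal not_less_iff_gr_or_eq)
  with A show ?thesis by blast
qed

lemma L2:
  assumes F_sub: "\<forall>A\<in>\<F>. finite A \<and> A \<subseteq> omega"
    and her: "hereditary \<F>"
    and cov: "\<Union>\<F> = omega"
    and P: "P \<in> partitions_in \<F>"
  shows "fnorm \<F> (tail_proj n x) \<le> (\<Sum>\<^sub>\<infinity>F\<in>{F\<in>P. \<not> F \<subseteq> {..n}}. (SUP k\<in>F. ennreal \<bar>x k\<bar>))"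
proof -
  define P' where "P' = {F\<in>P. \<not> F \<subseteq> {..n}}"
  define Q where "Q = (\<lambda>F. F - {..n}) ` P' \<union> (\<lambda>k. {k}) ` {1..n} \<union> {{}}"
  define gt where "gt = (\<lambda>G. SUP k\<in>G. ennreal \<bar>tail_proj n x k\<bar>)"
  have Ppart: "is_partition P" "P \<subseteq> \<F>" using P unfolding partitions_in_def by auto
  have Pcov: "\<Union>P = omega" and Pdisj: "\<And>A B. A \<in> P \<Longrightarrow> B \<in> P \<Longrightarrow> A \<noteq> B \<Longrightarrow> A \<inter> B = {}"
    using Ppart(1) unfolding is_partition_def by auto
  have inj: "inj_on (\<lambda>F. F - {..n}) P'"
  proof (rule inj_onI)
    fix A B assume AB: "A \<in> P'" "B \<in> P'" "A - {..n} = B - {..n}"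
    then obtain k where "k \<in> A" "k \<notin> {..n}" unfolding P'_def by auto
    with AB have "k \<in> A \<inter> B" by auto
    with AB Pdisj show "A = B" unfolding P'_def by blast
  qed
  have QF: "Q \<subseteq> \<F>"
  proof
    fix G assume "G \<in> Q"
    then consider (a) F where "F \<in> P'" "G = F - {..n}" | (b) k where "k \<in> {1..n}" "G = {k}" | (c) "G = {}"
      unfolding Q_def by auto
    then show "G \<in> \<F>"
    proof cases
      case a then show ?thesis using her Ppart(2) unfolding hereditary_def P'_def by blast
    next
      case b
      then have "k \<in> omega" unfolding omega_def by auto
      then obtain B where "B \<in> \<F>" "k \<in> B" using cov by auto
      then show ?thesis using b her unfolding hereditary_def by blast
    next
      case c
      have "1 \<in> omega" unfolding omega_def by auto
      then obtain B where "B \<in> \<F>" using cov by auto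
      then show ?thesis using c her unfolding hereditary_def by blast
    qed
  qed
  have Qpart: "is_partition Q"
    unfolding is_partition_def
  proof (intro conjI ballI impI)
    show "{} \<in> Q" unfolding Q_def by auto
    show "\<Union>Q = omega"
    proof
      show "\<Union>Q \<subseteq> omega"
        using Pcov unfolding Q_def P'_def omega_def by auto
      show "omega \<subseteq> \<Union>Q"
      proof
        fix k assume k: "k \<in> omega"
        show "k \<in> \<Union>Q"
        proof (cases "k \<le> n")
          case True then show ?thesis using k unfolding Q_def omega_def by auto
        next
          case False
          from k Pcov obtain F where "F \<in> P" "k \<in> F" by auto
          with False have "F \<in> P'" "k \<in> F - {..n}" unfolding P'_def by auto
          then show ?thesis unfolding Q_def by auto
        qed
      qed
    qed
    fix A B assume "A \<in> Q" "B \<in> Q" "A \<noteq> B"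
    then show "A \<inter> B = {}"
      unfolding Q_def P'_def using Pdisj by auto
  qed
  have "fnorm \<F> (tail_proj n x) \<le> (\<Sum>\<^sub>\<infinity>G\<in>Q. gt G)"
    unfolding fnorm_def gt_def
    by (rule INF_lower) (use QF Qpart in \<open>auto simp: partitions_in_def\<close>)
  also have "\<dots> \<le> (\<Sum>\<^sub>\<infinity>G\<in>(\<lambda>F. F - {..n}) ` P'. gt G)"
  proof (rule infsum_mono_neutral)
    fix G assume "G \<in> Q - (\<lambda>F. F - {..n}) ` P'"
    then have "G = {} \<or> (\<exists>k\<in>{1..n}. G = {k})" unfolding Q_def by auto
    then show "gt G \<le> 0" unfolding gt_def tail_proj_def by (auto simp: bot_ennreal)
  qed (auto intro: nonneg_summable_on_complete)
  also have "\<dots> = (\<Sum>\<^sub>\<infinity>F\<in>P'. gt (F - {..n}))"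
    using infsum_reindex[OF inj, of gt] by (simp add: o_def)
  also have "\<dots> \<le> (\<Sum>\<^sub>\<infinity>F\<in>P'. (SUP k\<in>F. ennreal \<bar>x k\<bar>))"
  proof (rule infsum_mono_neutral)
    fix F assume "F \<in> P' \<inter> P'"
    show "gt (F - {..n}) \<le> (SUP k\<in>F. ennreal \<bar>x k\<bar>)"
      unfolding gt_def tail_proj_def
      by (rule SUP_least) (auto intro: SUP_upper)
  qed (auto intro: nonneg_summable_on_complete)
  finally show ?thesis unfolding P'_def .
qed

lemma sup_fin:
  assumes "finite F"
  shows "(SUP k\<in>F. ennreal \<bar>x k\<bar>) < top"
proof -
  have "(SUP k\<in>F. ennreal \<bar>x k\<bar>) \<le> ennreal (\<Sum>k\<in>F. \<bar>x k\<bar>)"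
    by (rule SUP_least, rule ennreal_leI) (auto intro: member_le_sum assms)
  also have "\<dots> < top" by simp
  finally show ?thesis .
qed

lemma dir1:
  assumes F_sub: "\<forall>A\<in>\<F>. finite A \<and> A \<subseteq> omega"
    and her: "hereditary \<F>"
    and cov: "\<Union>\<F> = omega"
    and x: "fnorm \<F> x < top"
  shows "(\<lambda>n. fnorm \<F> (tail_proj n x)) \<longlonglongrightarrow> 0"
proof -
  define g where "g = (\<lambda>F. SUP k\<in>F. ennreal \<bar>x k\<bar>)"
  obtain P where P: "P \<in> partitions_in \<F>" and S: "infsum g P < top"
    using x unfolding fnorm_def INF_less_iff g_def by blast
  have Pfin: "\<And>F. F \<in> P \<Longrightarrow> finite F" using P F_sub unfolding partitions_in_def by auto
  show ?thesis
  proof (rule order_tendstoI)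
    fix a :: ennreal assume "a < 0" then show "eventually (\<lambda>n. a < fnorm \<F> (tail_proj n x)) sequentially"
      by simp
  next
    fix a :: ennreal assume a: "0 < a"
    obtain A where A: "finite A" "A \<subseteq> P" "infsum g P < sum g A + a"
      using L1[OF S a] by blast
    have "finite (\<Union>A)" using A Pfin by auto
    then obtain N where N: "\<Union>A \<subseteq> {..N}" using finite_nat_iff_bounded_le by blast
    have split: "infsum g P = sum g A + infsum g (P - A)"
    proof -
      have "infsum g P = infsum g (A \<union> (P - A))" using A(2) by (simp add: Un_absorb1)
      also have "\<dots> = infsum g A + infsum g (P - A)"
        by (rule infsum_Un_disjoint) (auto intro: nonneg_summable_on_complete)
      finally show ?thesis using A(1) by simp
    qed
    have rest: "infsum g (P - A) < a"
      using A(3) split S by simp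
    show "eventually (\<lambda>n. fnorm \<F> (tail_proj n x) < a) sequentially"
      unfolding eventually_sequentially
    proof (intro exI allI impI)
      fix n assume "N \<le> n"
      have "fnorm \<F> (tail_proj n x) \<le> infsum g {F\<in>P. \<not> F \<subseteq> {..n}}"
        using L2[OF F_sub her cov P] unfolding g_def .
      also have "\<dots> \<le> infsum g (P - A)"
      proof (rule infsum_mono_neutral)
        fix F assume "F \<in> {F\<in>P. \<not> F \<subseteq> {..n}} - (P - A)"
        then have False using N \<open>N \<le> n\<close> by auto
        then show "g F \<le> 0" ..
      qed (auto intro: nonneg_summable_on_complete)
      also have "\<dots> < a" by (rule rest)
      finally show "fnorm \<F> (tail_proj n x) < a" .
    qed
  qed
qed

lemma dir2:
  assumes F_sub: "\<forall>A\<in>\<F>. finite A \<and> A \<subseteq> omega"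
    and lim: "(\<lambda>n. fnorm \<F> (tail_proj n x)) \<longlonglongrightarrow> 0"
  shows "fnorm \<F> x < top"
proof -
  define g where "g = (\<lambda>F. SUP k\<in>F. ennreal \<bar>x k\<bar>)"
  have "eventually (\<lambda>n. fnorm \<F> (tail_proj n x) < 1) sequentially"
    using order_tendstoD(2)[OF lim] by simp
  then obtain n where n: "fnorm \<F> (tail_proj n x) < top"
    unfolding eventually_sequentially by (metis order.refl order_less_trans ennreal_one_less_top)
  define gt where "gt = (\<lambda>G. SUP k\<in>G. ennreal \<bar>tail_proj n x k\<bar>)"
  obtain P where P: "P \<in> partitions_in \<F>" and S: "infsum gt P < top"
    using n unfolding fnorm_def INF_less_iff gt_def by blast
  have Pfin: "\<And>F. F \<in> P \<Longrightarrow> finite F" using P F_sub unfolding partitions_in_def by auto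
  have Pdisj: "\<And>A B. A \<in> P \<Longrightarrow> B \<in> P \<Longrightarrow> A \<noteq> B \<Longrightarrow> A \<inter> B = {}"
    using P unfolding partitions_in_def is_partition_def by auto
  define P1 where "P1 = {F\<in>P. F \<inter> {..n} = {}}"
  define P2 where "P2 = {F\<in>P. F \<inter> {..n} \<noteq> {}}"
  have inj: "inj_on (\<lambda>F. F \<inter> {..n}) P2"
  proof (rule inj_onI)
    fix A B assume AB: "A \<in> P2" "B \<in> P2" "A \<inter> {..n} = B \<inter> {..n}"
    then have "A \<inter> B \<noteq> {}" unfolding P2_def by auto
    with AB Pdisj show "A = B" unfolding P2_def by blast
  qed
  have "finite ((\<lambda>F. F \<inter> {..n}) ` P2)"
    by (rule finite_subset[of _ "Pow {..n}"]) auto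
  then have fin2: "finite P2" using finite_imageD[OF _ inj] by blast
  have e1: "infsum g P = infsum g P1 + infsum g P2"
  proof -
    have "infsum g P = infsum g (P1 \<union> P2)"
      unfolding P1_def P2_def by (rule arg_cong[of _ _ "infsum g"]) auto
    also have "\<dots> = infsum g P1 + infsum g P2"
      by (rule infsum_Un_disjoint) (auto intro: nonneg_summable_on_complete simp: P1_def P2_def)
    finally show ?thesis .
  qed
  have e2: "infsum g P1 = infsum gt P1"
    by (rule infsum_cong) (auto simp: g_def gt_def P1_def tail_proj_def intro!: SUP_cong)
  have e3: "infsum gt P1 \<le> infsum gt P"
    by (rule infsum_mono_neutral) (auto intro: nonneg_summable_on_complete simp: P1_def)
  have e4: "infsum g P2 < top"
    using fin2 Pfin sup_fin unfolding g_def P2_def by (simp add: sup_fin)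
  have "infsum g P < top"
    using e1 e2 e3 e4 S by (simp add: ennreal_add_less_top order.strict_trans1)
  then show ?thesis
    unfolding fnorm_def INF_less_iff g_def using P by blast
qed

theorem mainTheorem6:
  fixes \<F> :: "nat set set"
  assumes "\<forall>A\<in>\<F>. finite A \<and> A \<subseteq> omega"
    and "compact (char_set ` \<F>)"
    and "hereditary \<F>"
    and "\<Union>\<F> = omega"
  shows "XF \<F> = FIN (fnorm \<F>)"
  unfolding XF_def EXH_def FIN_def
proof (intro equalityI subsetI)
  fix x assume "x \<in> {x. (\<lambda>n. fnorm \<F> (tail_proj n x)) \<longlonglongrightarrow> 0}"
  then have "fnorm \<F> x < top" using dir2[OF assms(1)] by simp
  then show "x \<in> {x. fnorm \<F> x < \<infinity>}" by simp
next
  fix x assume "x \<in> {x. fnorm \<F> x < \<infinity>}"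
  then have "fnorm \<F> x < top" by simp
  then show "x \<in> {x. (\<lambda>n. fnorm \<F> (tail_proj n x)) \<longlonglongrightarrow> 0}"
    using dir1[OF assms(1) assms(3) assms(4)] by simp
qed

end
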